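(* Let $\epsilon\in\,]0,1[$. The mapping $K\mapsto \mathcal{P}^-(K,\epsilon)$ induces a functor from the category $\square^{op}\mathbf{Set}$ of precubical sets to the category ${\mathbf{Top}}$ of topological spaces.
   Context: ${\mathbf{Top}}$ denotes the category of $\Delta$-generated spaces (or of $\Delta$-Hausdorff $\Delta$-generated spaces), with internal hom $\mathbf{TOP}(-,-)$ (the $\Delta$-kelleyfication of the compact-open topology). $\square$ is the box category (objects $[n]=\{0,1\}^n$, $n\geqslant 0$, generated by the coface maps $\delta_i^\alpha$) and $\square^{op}\mathbf{Set}$ is the category of precubical sets (presheaves over $\square$). For a precubical set $K$, $|K|_{geom}=\int^{[n]\in\square}K_n.[0,1]^n$ is its geometric realization, and each $n$-cube $c$ induces a map $|c|_{geom}:[0,1]^n\to |K|_{geom}$. The initial vertex of an $n$-cube $c$ is $c^-=\partial_1^0\cdots\partial_n^0c$, and for $\alpha\in K_0$, $\mathcal{C}^-_\alpha(K)=\{c\in K\mid \dim(c)\geqslant 1,\ c^-=\alpha\}$. Let $0_n=(0,\dots,0)$. For $n\geqslant 1$ and $0<\epsilon<1$, $N_n(\epsilon)$ is the set of natural directed paths $\phi=(\phi_1,\dots,\phi_n):[0,\epsilon]\to[0,1]^n$ (continuous, non-decreasing in each coordinate, with $\phi_1(t)+\dots+\phi_n(t)=t$ for all $t$, so that $\phi(0)=0_n$), equipped with the $\Delta$-kelleyfication of the relative topology from $\mathbf{TOP}([0,\epsilon],[0,1]^n)$. The homotopy branching space is $\mathcal{P}^-(K,\epsilon)=\coprod_{\alpha\in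 K_0}\mathcal{P}^-_\alpha(K,\epsilon)$, where $\mathcal{P}^-_\alpha(K,\epsilon)=\{|c|_{geom}\phi\mid c\in\mathcal{C}^-_\alpha(K),\ \phi\in N_{\dim(c)}(\epsilon)\}$ carries the $\Delta$-kelleyfication of the relative topology from $\mathbf{TOP}([0,\epsilon],|K|_{geom})$. *)

theory Defs
  imports "HOL-Analysis.Analysis" "HOL-Homology.Simplices" "HOL-Library.FuncSet"
begin

definition final_open :: "'a set \<Rightarrow> ('b topology \<times> ('b \<Rightarrow> 'a)) set \<Rightarrow> 'a set \<Rightarrow> bool" where
  "final_open S F U \<longleftrightarrow> U \<subseteq> S \<and>
     (\<forall>p \<in> F. openin (fst p) {x \<in> topspace (fst p). snd p x \<in> U})"

lemma istopology_final_open: "istopology (final_open S F)"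
  unfolding istopology_def
proof (intro conjI allI impI)
  fix U V assume U: "final_open S F U" and V: "final_open S F V"
  have "openin (fst p) {x \<in> topspace (fst p). snd p x \<in> U \<inter> V}" if "p \<in> F" for p
  proof -
    have "openin (fst p) ({x \<in> topspace (fst p). snd p x \<in> U} \<inter> {x \<in> topspace (fst p). snd p x \<in> V})"
      using U V that unfolding final_open_def by (intro openin_Int) auto
    moreover have "{x \<in> topspace (fst p). snd p x \<in> U} \<inter> {x \<in> topspace (fst p). snd p x \<in> V}
        = {x \<in> topspace (fst p). snd p x \<in> U \<inter> V}" by auto
    ultimately show ?thesis by simp
  qed
  then show "final_open S F (U \<inter> V)" using U unfolding final_open_def by auto
next
  fix K assume K: "\<forall>U\<in>K. final_open S F U"
  have "openin (fst p) {x \<in> topspace (fst p). snd p x \<in> \<Union>K}" if "p \<in> F" for p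
  proof -
    have "openin (fst p) (\<Union>U\<in>K. {x \<in> topspace (fst p). snd p x \<in> U})"
      using K that unfolding final_open_def by (intro openin_Union) auto
    moreover have "(\<Union>U\<in>K. {x \<in> topspace (fst p). snd p x \<in> U}) = {x \<in> topspace (fst p). snd p x \<in> \<Union>K}" by auto
    ultimately show ?thesis by simp
  qed
  then show "final_open S F (\<Union>K)" using K unfolding final_open_def by auto
qed

definition final_topology :: "'a set \<Rightarrow> ('b topology \<times> ('b \<Rightarrow> 'a)) set \<Rightarrow> 'a topology" where
  "final_topology S F = topology (final_open S F)"

lemma openin_final_topology: "openin (final_topology S F) U \<longleftrightarrow> final_open S F U"
  unfolding final_topology_def by (simp add: istopology_final_open)

definition simplex_top :: "nat \<Rightarrow> (nat \<Rightarrow> real) topology" where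
  "simplex_top n = subtopology (powertop_real UNIV) (standard_simplex n)"

definition delta_kelleyfy :: "'a topology \<Rightarrow> 'a topology" where
  "delta_kelleyfy X = final_topology (topspace X)
     {(simplex_top n, \<sigma>) | n \<sigma>. continuous_map (simplex_top n) X \<sigma>}"

definition delta_generated :: "'a topology \<Rightarrow> bool" where
  "delta_generated X \<longleftrightarrow> delta_kelleyfy X = X"

definition interval_top :: "real \<Rightarrow> real topology" where
  "interval_top e = top_of_set {0..e}"

definition path_carrier :: "real \<Rightarrow> 'a topology \<Rightarrow> (real \<Rightarrow> 'a) set" where
  "path_carrier e X = {\<gamma>. \<gamma> \<in> extensional {0..e} \<and> continuous_map (interval_top e) X \<gamma>}"

definition compact_open :: "real \<Rightarrow> 'a topology \<Rightarrow> (real \<Rightarrow> 'a) topology" where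
  "compact_open e X = topology_generated_by
     (insert (path_carrier e X)
       {{\<gamma> \<in> path_carrier e X. \<gamma> ` C \<subseteq> U} | C U. compact C \<and> C \<subseteq> {0..e} \<and> openin X U})"

definition TOP :: "real \<Rightarrow> 'a topology \<Rightarrow> (real \<Rightarrow> 'a) topology" where
  "TOP e X = delta_kelleyfy (compact_open e X)"

text \<open>A precubical set is given by sets K n of n-cubes and face maps
  d n i a : K n -> K (n-1) (for 1 <= i <= n), the map written \<partial>_i^a, where
  a = False means 0 and a = True means 1, subject to the precubical identities
  \<partial>_i^a \<partial>_j^b = \<partial>_(j-1)^b \<partial>_i^a for i < j.\<close>

definition precubical :: "(nat \<Rightarrow> 'a set) \<Rightarrow> (nat \<Rightarrow> nat \<Rightarrow> bool \<Rightarrow> 'a \<Rightarrow> 'a) \<Rightarrow> bool" where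
  "precubical K d \<longleftrightarrow>
     (\<forall>n i a c. c \<in> K (Suc n) \<and> 1 \<le> i \<and> i \<le> Suc n \<longrightarrow> d (Suc n) i a c \<in> K n) \<and>
     (\<forall>n i j a b c. c \<in> K (Suc (Suc n)) \<and> 1 \<le> i \<and> i < j \<and> j \<le> Suc (Suc n) \<longrightarrow>
        d (Suc n) i a (d (Suc (Suc n)) j b c) = d (Suc n) (j - 1) b (d (Suc (Suc n)) i a c))"

definition precubical_map ::
  "(nat \<Rightarrow> 'a set) \<Rightarrow> (nat \<Rightarrow> nat \<Rightarrow> bool \<Rightarrow> 'a \<Rightarrow> 'a) \<Rightarrow>
   (nat \<Rightarrow> 'b set) \<Rightarrow> (nat \<Rightarrow> nat \<Rightarrow> bool \<Rightarrow> 'b \<Rightarrow> 'b) \<Rightarrow> (nat \<Rightarrow> 'a \<Rightarrow> 'b) \<Rightarrow> bool" where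
  "precubical_map K dK L dL f \<longleftrightarrow>
     (\<forall>n. \<forall>c \<in> K n. f n c \<in> L n) \<and>
     (\<forall>n i a c. c \<in> K (Suc n) \<and> 1 \<le> i \<and> i \<le> Suc n \<longrightarrow>
        f n (dK (Suc n) i a c) = dL (Suc n) i a (f (Suc n) c))"

definition cube :: "nat \<Rightarrow> (nat \<Rightarrow> real) set" where
  "cube n = {t. (\<forall>k<n. 0 \<le> t k \<and> t k \<le> 1) \<and> (\<forall>k\<ge>n. t k = 0)}"

definition cube_top :: "nat \<Rightarrow> (nat \<Rightarrow> real) topology" where
  "cube_top n = subtopology (powertop_real UNIV) (cube n)"

text \<open>The coface map \<delta>_i^a : [0,1]^(n-1) -> [0,1]^n inserting a at (1-based) position i.\<close>
definition coface :: "nat \<Rightarrow> bool \<Rightarrow> (nat \<Rightarrow> real) \<Rightarrow> (nat \<Rightarrow> real)" where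
  "coface i a s = (\<lambda>k. if k < i - 1 then s k else if k = i - 1 then (if a then 1 else 0) else s (k - 1))"

definition cells_top :: "(nat \<Rightarrow> 'a set) \<Rightarrow> (nat \<times> ('a \<times> (nat \<Rightarrow> real))) topology" where
  "cells_top K = sum_topology (\<lambda>n. prod_topology (discrete_topology (K n)) (cube_top n)) UNIV"

text \<open>Generating relation of the coend: (n-1, \<partial>_i^a c, s) ~ (n, c, \<delta>_i^a s).\<close>
definition real_rel :: "(nat \<Rightarrow> 'a set) \<Rightarrow> (nat \<Rightarrow> nat \<Rightarrow> bool \<Rightarrow> 'a \<Rightarrow> 'a) \<Rightarrow>
    (nat \<times> ('a \<times> (nat \<Rightarrow> real))) \<Rightarrow> (nat \<times> ('a \<times> (nat \<Rightarrow> real))) \<Rightarrow> bool" where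
  "real_rel K d x y \<longleftrightarrow> (\<exists>n c i a s. c \<in> K (Suc n) \<and> 1 \<le> i \<and> i \<le> Suc n \<and> s \<in> cube n \<and>
      x = (n, (d (Suc n) i a c, s)) \<and> y = (Suc n, (c, coface i a s)))"

definition real_class :: "(nat \<Rightarrow> 'a set) \<Rightarrow> (nat \<Rightarrow> nat \<Rightarrow> bool \<Rightarrow> 'a \<Rightarrow> 'a) \<Rightarrow>
    (nat \<times> ('a \<times> (nat \<Rightarrow> real))) \<Rightarrow> (nat \<times> ('a \<times> (nat \<Rightarrow> real))) set" where
  "real_class K d x = {y. (symclp (real_rel K d))\<^sup>*\<^sup>* x y}"

definition geom_real :: "(nat \<Rightarrow> 'a set) \<Rightarrow> (nat \<Rightarrow> nat \<Rightarrow> bool \<Rightarrow> 'a \<Rightarrow> 'a) \<Rightarrow>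
    (nat \<times> ('a \<times> (nat \<Rightarrow> real))) set topology" where
  "geom_real K d = final_topology (real_class K d ` topspace (cells_top K))
     {(cells_top K, real_class K d)}"

definition geom_cube :: "(nat \<Rightarrow> 'a set) \<Rightarrow> (nat \<Rightarrow> nat \<Rightarrow> bool \<Rightarrow> 'a \<Rightarrow> 'a) \<Rightarrow> nat \<Rightarrow> 'a \<Rightarrow>
    (nat \<Rightarrow> real) \<Rightarrow> (nat \<times> ('a \<times> (nat \<Rightarrow> real))) set" where
  "geom_cube K d n c t = real_class K d (n, (c, t))"

definition geom_map :: "(nat \<Rightarrow> 'b set) \<Rightarrow> (nat \<Rightarrow> nat \<Rightarrow> bool \<Rightarrow> 'b \<Rightarrow> 'b) \<Rightarrow> (nat \<Rightarrow> 'a \<Rightarrow> 'b) \<Rightarrow>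
    (nat \<times> ('a \<times> (nat \<Rightarrow> real))) set \<Rightarrow> (nat \<times> ('b \<times> (nat \<Rightarrow> real))) set" where
  "geom_map L dL f x = (case SOME p. p \<in> x of (n, (c, t)) \<Rightarrow> real_class L dL (n, (f n c, t)))"

text \<open>Initial vertex c^- = \<partial>_1^0 ... \<partial>_n^0 c of an n-cube.\<close>
primrec init_vertex :: "(nat \<Rightarrow> nat \<Rightarrow> bool \<Rightarrow> 'a \<Rightarrow> 'a) \<Rightarrow> nat \<Rightarrow> 'a \<Rightarrow> 'a" where
  "init_vertex d 0 c = c"
| "init_vertex d (Suc n) c = init_vertex d n (d (Suc n) (Suc n) False c)"

definition init_cubes :: "(nat \<Rightarrow> 'a set) \<Rightarrow> (nat \<Rightarrow> nat \<Rightarrow> bool \<Rightarrow> 'a \<Rightarrow> 'a) \<Rightarrow> 'a \<Rightarrow> (nat \<times> 'a) set" where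
  "init_cubes K d \<alpha> = {(n, c). 1 \<le> n \<and> c \<in> K n \<and> init_vertex d n c = \<alpha>}"

definition natural_paths :: "nat \<Rightarrow> real \<Rightarrow> (real \<Rightarrow> (nat \<Rightarrow> real)) set" where
  "natural_paths n e = {\<phi>. \<phi> \<in> extensional {0..e} \<and>
      continuous_map (interval_top e) (cube_top n) \<phi> \<and>
      (\<forall>k<n. \<forall>s s'. 0 \<le> s \<and> s \<le> s' \<and> s' \<le> e \<longrightarrow> \<phi> s k \<le> \<phi> s' k) \<and>
      (\<forall>s\<in>{0..e}. (\<Sum>k<n. \<phi> s k) = s)}"

definition Pminus_set :: "(nat \<Rightarrow> 'a set) \<Rightarrow> (nat \<Rightarrow> nat \<Rightarrow> bool \<Rightarrow> 'a \<Rightarrow> 'a) \<Rightarrow> real \<Rightarrow> 'a \<Rightarrow>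
    (real \<Rightarrow> (nat \<times> ('a \<times> (nat \<Rightarrow> real))) set) set" where
  "Pminus_set K d e \<alpha> = {restrict (geom_cube K d n c \<circ> \<phi>) {0..e} | n c \<phi>.
      (n, c) \<in> init_cubes K d \<alpha> \<and> \<phi> \<in> natural_paths n e}"

definition Pminus_alpha :: "(nat \<Rightarrow> 'a set) \<Rightarrow> (nat \<Rightarrow> nat \<Rightarrow> bool \<Rightarrow> 'a \<Rightarrow> 'a) \<Rightarrow> real \<Rightarrow> 'a \<Rightarrow>
    (real \<Rightarrow> (nat \<times> ('a \<times> (nat \<Rightarrow> real))) set) topology" where
  "Pminus_alpha K d e \<alpha> = delta_kelleyfy (subtopology (TOP e (geom_real K d)) (Pminus_set K d e \<alpha>))"

definition Pminus :: "(nat \<Rightarrow> 'a set) \<Rightarrow> (nat \<Rightarrow> nat \<Rightarrow> bool \<Rightarrow> 'a \<Rightarrow> 'a) \<Rightarrow> real \<Rightarrow>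
    ('a \<times> (real \<Rightarrow> (nat \<times> ('a \<times> (nat \<Rightarrow> real))) set)) topology" where
  "Pminus K d e = sum_topology (Pminus_alpha K d e) (K 0)"

definition Pminus_map :: "(nat \<Rightarrow> 'b set) \<Rightarrow> (nat \<Rightarrow> nat \<Rightarrow> bool \<Rightarrow> 'b \<Rightarrow> 'b) \<Rightarrow> (nat \<Rightarrow> 'a \<Rightarrow> 'b) \<Rightarrow> real \<Rightarrow>
    'a \<times> (real \<Rightarrow> (nat \<times> ('a \<times> (nat \<Rightarrow> real))) set) \<Rightarrow>
    'b \<times> (real \<Rightarrow> (nat \<times> ('b \<times> (nat \<Rightarrow> real))) set)" where
  "Pminus_map L dL f e p = (f 0 (fst p), restrict (geom_map L dL f \<circ> snd p) {0..e})"

end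

theory Submission
  imports Defs
begin

lemma topspace_final_topology:
  assumes "\<forall>p\<in>F. snd p ` topspace (fst p) \<subseteq> S"
  shows "topspace (final_topology S F) = S"
proof -
  have op: "openin (final_topology S F) S"
    unfolding openin_final_topology final_open_def
  proof (intro conjI ballI)
    fix p assume "p \<in> F"
    then have "{x \<in> topspace (fst p). snd p x \<in> S} = topspace (fst p)" using assms by blast
    then show "openin (fst p) {x \<in> topspace (fst p). snd p x \<in> S}" by simp
  qed simp
  have sub: "\<And>U. openin (final_topology S F) U \<Longrightarrow> U \<subseteq> S"
    by (simp add: openin_final_topology final_open_def)
  show ?thesis
    using openin_subset[OF op] sub[OF openin_topspace] by (rule subset_antisym[rotated])
qed

lemma continuous_map_final_topology_in:
  assumes "\<forall>p\<in>F. snd p ` topspace (fst p) \<subseteq> S" "p \<in> F"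
  shows "continuous_map (fst p) (final_topology S F) (snd p)"
  unfolding continuous_map
proof (intro conjI allI impI)
  show "snd p ` topspace (fst p) \<subseteq> topspace (final_topology S F)"
    using topspace_final_topology[OF assms(1)] assms(1) assms(2) by simp
  fix U assume "openin (final_topology S F) U"
  then show "openin (fst p) {x \<in> topspace (fst p). snd p x \<in> U}"
    using assms(2) by (simp add: openin_final_topology final_open_def)
qed

lemma continuous_map_final_topology_from:
  assumes "\<forall>p\<in>F. snd p ` topspace (fst p) \<subseteq> S" "h ` S \<subseteq> topspace Y"
    "\<forall>p\<in>F. continuous_map (fst p) Y (h \<circ> snd p)"
  shows "continuous_map (final_topology S F) Y h"
  unfolding continuous_map
proof (intro conjI allI impI)
  show "h ` topspace (final_topology S F) \<subseteq> topspace Y"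
    using topspace_final_topology[OF assms(1)] assms(2) by simp
  fix U assume U: "openin Y U"
  have "final_open S F {x \<in> S. h x \<in> U}"
    unfolding final_open_def
  proof (intro conjI ballI)
    fix p assume p: "p \<in> F"
    have "{x \<in> topspace (fst p). snd p x \<in> {x \<in> S. h x \<in> U}}
        = {x \<in> topspace (fst p). (h \<circ> snd p) x \<in> U}" using assms(1) p by auto
    then show "openin (fst p) {x \<in> topspace (fst p). snd p x \<in> {x \<in> S. h x \<in> U}}"
      using openin_continuous_map_preimage[OF bspec[OF assms(3) p] U] by simp
  qed blast
  moreover have "topspace (final_topology S F) = S"
    using topspace_final_topology[OF assms(1)] .
  ultimately show "openin (final_topology S F) {x \<in> topspace (final_topology S F). h x \<in> U}"
    unfolding openin_final_topology by simp
qed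

lemma dk_images:
  "\<forall>p\<in>{(simplex_top n, \<sigma>) | n \<sigma>. continuous_map (simplex_top n) X \<sigma>}.
      snd p ` topspace (fst p) \<subseteq> topspace X"
proof (intro ballI)
  fix p assume "p \<in> {(simplex_top n, \<sigma>) | n \<sigma>. continuous_map (simplex_top n) X \<sigma>}"
  then obtain n \<sigma> where "p = (simplex_top n, \<sigma>)" "continuous_map (simplex_top n) X \<sigma>" by blast
  then show "snd p ` topspace (fst p) \<subseteq> topspace X"
    using continuous_map_image_subset_topspace by simp
qed

lemma topspace_delta_kelleyfy [simp]: "topspace (delta_kelleyfy X) = topspace X"
  unfolding delta_kelleyfy_def by (rule topspace_final_topology[OF dk_images])

lemma openin_delta_kelleyfy: "openin X U \<Longrightarrow> openin (delta_kelleyfy X) U"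
  unfolding delta_kelleyfy_def openin_final_topology final_open_def
  by (auto simp: openin_subset openin_continuous_map_preimage)

lemma continuous_map_delta_kelleyfy_id: "continuous_map (delta_kelleyfy X) X (\<lambda>x. x)"
  unfolding continuous_map
proof (intro conjI allI impI)
  fix U assume "openin X U"
  moreover have "{x \<in> topspace X. x \<in> U} = U" using openin_subset[OF calculation] by blast
  ultimately show "openin (delta_kelleyfy (X::'a topology)) {x \<in> topspace (delta_kelleyfy X). x \<in> U}"
    by (simp add: openin_delta_kelleyfy)
qed simp

lemma continuous_map_simplex_dk:
  "continuous_map (simplex_top n) (delta_kelleyfy X) \<sigma> \<longleftrightarrow> continuous_map (simplex_top n) X \<sigma>"
proof
  assume c: "continuous_map (simplex_top n) (delta_kelleyfy X) \<sigma>"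
  show "continuous_map (simplex_top n) X \<sigma>"
    using continuous_map_compose[OF c continuous_map_delta_kelleyfy_id] by (simp add: o_def)
next
  assume "continuous_map (simplex_top n) X \<sigma>"
  then show "continuous_map (simplex_top n) (delta_kelleyfy X) \<sigma>"
    unfolding delta_kelleyfy_def
    using continuous_map_final_topology_in[OF dk_images, of "(simplex_top n, \<sigma>)"]
    by auto
qed

lemma continuous_map_from_dk:
  assumes "h ` topspace X \<subseteq> topspace Y"
    "\<And>n \<sigma>. continuous_map (simplex_top n) X \<sigma> \<Longrightarrow> continuous_map (simplex_top n) Y (h \<circ> \<sigma>)"
  shows "continuous_map (delta_kelleyfy X) Y h"
  unfolding delta_kelleyfy_def
  by (rule continuous_map_final_topology_from[OF dk_images]) (use assms in auto)

lemma continuous_map_from_sum: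
  assumes "\<And>i. i \<in> I \<Longrightarrow> continuous_map (X i) Y (\<lambda>x. h (i, x))"
  shows "continuous_map (sum_topology X I) Y h"
  unfolding continuous_map
proof (intro conjI allI impI)
  show "h ` topspace (sum_topology X I) \<subseteq> topspace Y"
  proof (clarsimp)
    fix i x assume "i \<in> I" "x \<in> topspace (X i)"
    then show "h (i, x) \<in> topspace Y"
      using continuous_map_image_subset_topspace[OF assms[OF \<open>i \<in> I\<close>]] by blast
  qed
  fix U assume U: "openin Y U"
  show "openin (sum_topology X I) {x \<in> topspace (sum_topology X I). h x \<in> U}"
    unfolding openin_sum_topology
  proof (intro conjI ballI)
    fix i assume i: "i \<in> I"
    have "{x. (i, x) \<in> {x \<in> topspace (sum_topology X I). h x \<in> U}} = {x \<in> topspace (X i). h (i, x) \<in> U}"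
      using i by auto
    then show "openin (X i) {x. (i, x) \<in> {x \<in> topspace (sum_topology X I). h x \<in> U}}"
      using openin_continuous_map_preimage[OF assms[OF i] U] by simp
  qed auto
qed

lemma delta_generated_sum:
  "delta_generated (sum_topology (\<lambda>i. delta_kelleyfy (Y i)) I)"
  unfolding delta_generated_def
proof (subst topology_eq, intro allI iffI)
  let ?Z = "sum_topology (\<lambda>i. delta_kelleyfy (Y i)) I"
  fix U
  assume "openin ?Z U" then show "openin (delta_kelleyfy ?Z) U" by (rule openin_delta_kelleyfy)
next
  let ?Z = "sum_topology (\<lambda>i. delta_kelleyfy (Y i)) I"
  fix U
  assume U: "openin (delta_kelleyfy ?Z) U"
  then have U': "final_open (topspace ?Z) {(simplex_top n, \<sigma>) | n \<sigma>. continuous_map (simplex_top n) ?Z \<sigma>} U"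
    unfolding delta_kelleyfy_def openin_final_topology .
  show "openin ?Z U"
    unfolding openin_sum_topology
  proof (intro conjI ballI)
    show "U \<subseteq> Sigma I (topspace \<circ> (\<lambda>i. delta_kelleyfy (Y i)))"
      using U' unfolding final_open_def by simp
    fix i assume i: "i \<in> I"
    show "openin (delta_kelleyfy (Y i)) {x. (i, x) \<in> U}"
      unfolding delta_kelleyfy_def openin_final_topology final_open_def
    proof (intro conjI ballI)
      show "{x. (i, x) \<in> U} \<subseteq> topspace (Y i)"
        using U' unfolding final_open_def by auto
      fix p assume "p \<in> {(simplex_top n, \<sigma>) | n \<sigma>. continuous_map (simplex_top n) (Y i) \<sigma>}"
      then obtain n \<sigma> where p: "p = (simplex_top n, \<sigma>)" and c: "continuous_map (simplex_top n) (Y i) \<sigma>"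
        by blast
      have c2: "continuous_map (simplex_top n) ?Z ((\<lambda>x. (i, x)) \<circ> \<sigma>)"
        using continuous_map_compose[OF continuous_map_simplex_dk[THEN iffD2, OF c]
            continuous_map_component_injection[OF i, of "\<lambda>i. delta_kelleyfy (Y i)"]] .
      have mem: "(simplex_top n, (\<lambda>x. (i, x)) \<circ> \<sigma>) \<in> {(simplex_top n, \<sigma>) | n \<sigma>. continuous_map (simplex_top n) ?Z \<sigma>}"
        using c2 by blast
      have "openin (simplex_top n) {x \<in> topspace (simplex_top n). ((\<lambda>x. (i, x)) \<circ> \<sigma>) x \<in> U}"
        using bspec[OF conjunct2[OF U'[unfolded final_open_def]] mem] by simp
      then show "openin (fst p) {x \<in> topspace (fst p). snd p x \<in> {x. (i, x) \<in> U}}"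
        using p by simp
    qed
  qed
qed


section \<open>Precubical maps and realization\<close>

definition cellmap :: "(nat \<Rightarrow> 'a \<Rightarrow> 'b) \<Rightarrow> nat \<times> ('a \<times> (nat \<Rightarrow> real)) \<Rightarrow> nat \<times> ('b \<times> (nat \<Rightarrow> real))" where
  "cellmap f x = (fst x, f (fst x) (fst (snd x)), snd (snd x))"

lemma pm_id: "precubical_map K dK K dK (\<lambda>n c. c)"
  by (simp add: precubical_map_def)

lemma pm_comp:
  assumes "precubical_map K dK L dL f" "precubical_map L dL M dM g"
  shows "precubical_map K dK M dM (\<lambda>n. g n \<circ> f n)"
  unfolding precubical_map_def
proof (intro conjI allI impI ballI)
  fix n c assume "c \<in> K n"
  then show "(g n \<circ> f n) c \<in> M n" using assms unfolding precubical_map_def by simp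
next
  fix n i a c assume h: "c \<in> K (Suc n) \<and> 1 \<le> i \<and> i \<le> Suc n"
  then have fc: "f (Suc n) c \<in> L (Suc n)" using assms(1) unfolding precubical_map_def by simp
  have "f n (dK (Suc n) i a c) = dL (Suc n) i a (f (Suc n) c)"
    using assms(1) h unfolding precubical_map_def by blast
  moreover have "g n (dL (Suc n) i a (f (Suc n) c)) = dM (Suc n) i a (g (Suc n) (f (Suc n) c))"
    using assms(2) h fc unfolding precubical_map_def by blast
  ultimately show "(g n \<circ> f n) (dK (Suc n) i a c) = dM (Suc n) i a ((g (Suc n) \<circ> f (Suc n)) c)"
    by simp
qed

lemma real_rel_map:
  assumes f: "precubical_map K dK L dL f" and r: "real_rel K dK x y"
  shows "real_rel L dL (cellmap f x) (cellmap f y)"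
proof -
  obtain n c i a s where h: "c \<in> K (Suc n)" "1 \<le> i" "i \<le> Suc n" "s \<in> cube n"
    "x = (n, (dK (Suc n) i a c, s))" "y = (Suc n, (c, coface i a s))"
    using r unfolding real_rel_def by blast
  have fc: "f (Suc n) c \<in> L (Suc n)" using f h(1) unfolding precubical_map_def by simp
  have fd: "f n (dK (Suc n) i a c) = dL (Suc n) i a (f (Suc n) c)"
    using f h(1-3) unfolding precubical_map_def by blast
  have "cellmap f x = (n, (dL (Suc n) i a (f (Suc n) c), s))"
    using h(5) fd by (simp add: cellmap_def)
  moreover have "cellmap f y = (Suc n, (f (Suc n) c, coface i a s))"
    using h(6) by (simp add: cellmap_def)
  ultimately show ?thesis
    unfolding real_rel_def using fc h(2-4) by blast
qed

lemma rtc_map: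
  assumes f: "precubical_map K dK L dL f"
    and r: "(symclp (real_rel K dK))\<^sup>*\<^sup>* x y"
  shows "(symclp (real_rel L dL))\<^sup>*\<^sup>* (cellmap f x) (cellmap f y)"
  using r
proof (induction rule: rtranclp_induct)
  case base
  then show ?case by simp
next
  case (step y z)
  have "symclp (real_rel L dL) (cellmap f y) (cellmap f z)"
    using step(2) real_rel_map[OF f] unfolding symclp_def by blast
  then show ?case using step(3) by (rule rtranclp.rtrancl_into_rtrancl[rotated])
qed

lemma class_eq:
  assumes "(symclp R)\<^sup>*\<^sup>* x y"
  shows "{z. (symclp R)\<^sup>*\<^sup>* x z} = {z. (symclp R)\<^sup>*\<^sup>* y z}"
proof -
  have yx: "(symclp R)\<^sup>*\<^sup>* y x" using assms by (rule rtranclp_symclp_sym)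
  show ?thesis
    using assms yx by (blast intro: rtranclp_trans)
qed

lemma geom_map_class:
  assumes f: "precubical_map K dK L dL f"
  shows "geom_map L dL f (real_class K dK x) = real_class L dL (cellmap f x)"
proof -
  define p where "p = (SOME p. p \<in> real_class K dK x)"
  have "x \<in> real_class K dK x" by (simp add: real_class_def)
  then have "p \<in> real_class K dK x" unfolding p_def by (rule someI)
  then have "(symclp (real_rel K dK))\<^sup>*\<^sup>* x p" by (simp add: real_class_def)
  then have "(symclp (real_rel L dL))\<^sup>*\<^sup>* (cellmap f x) (cellmap f p)" by (rule rtc_map[OF f])
  then have eq: "real_class L dL (cellmap f p) = real_class L dL (cellmap f x)"
    unfolding real_class_def by (rule class_eq[symmetric])
  obtain n c t where pe: "p = (n, (c, t))" by (cases p) auto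
  have "geom_map L dL f (real_class K dK x) = real_class L dL (n, (f n c, t))"
    unfolding geom_map_def p_def[symmetric] pe by simp
  also have "\<dots> = real_class L dL (cellmap f p)" by (simp add: pe cellmap_def)
  finally show ?thesis using eq by simp
qed

lemma init_vertex_map:
  assumes K: "precubical K dK" and f: "precubical_map K dK L dL f"
  shows "c \<in> K n \<Longrightarrow> f 0 (init_vertex dK n c) = init_vertex dL n (f n c)"
proof (induction n arbitrary: c)
  case 0
  then show ?case by simp
next
  case (Suc n)
  have d: "dK (Suc n) (Suc n) False c \<in> K n" using K Suc.prems unfolding precubical_def by simp
  have fd: "f n (dK (Suc n) (Suc n) False c) = dL (Suc n) (Suc n) False (f (Suc n) c)"
    using f Suc.prems unfolding precubical_map_def by simp
  show ?case using Suc.IH[OF d] fd by simp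
qed

lemma post_geom_cube:
  fixes e :: real
  assumes f: "precubical_map K dK L dL f"
  shows "restrict (geom_map L dL f \<circ> restrict (geom_cube K dK n c \<circ> \<phi>) {0..e}) {0..e}
       = restrict (geom_cube L dL n (f n c) \<circ> \<phi>) {0..e}"
proof (rule restrict_ext)
  fix s :: real assume "s \<in> {0..e}"
  then show "(geom_map L dL f \<circ> restrict (geom_cube K dK n c \<circ> \<phi>) {0..e}) s
      = (geom_cube L dL n (f n c) \<circ> \<phi>) s"
    by (simp add: geom_cube_def geom_map_class[OF f] cellmap_def)
qed

lemma Pset_map:
  assumes K: "precubical K dK" and f: "precubical_map K dK L dL f"
    and g: "\<gamma> \<in> Pminus_set K dK e \<alpha>"
  shows "restrict (geom_map L dL f \<circ> \<gamma>) {0..e} \<in> Pminus_set L dL e (f 0 \<alpha>)"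
proof -
  obtain n c \<phi> where h: "\<gamma> = restrict (geom_cube K dK n c \<circ> \<phi>) {0..e}"
    "(n, c) \<in> init_cubes K dK \<alpha>" "\<phi> \<in> natural_paths n e"
    using g unfolding Pminus_set_def by blast
  have c: "1 \<le> n" "c \<in> K n" "init_vertex dK n c = \<alpha>" using h(2) by (auto simp: init_cubes_def)
  have fc: "f n c \<in> L n" using f c(2) unfolding precubical_map_def by simp
  have "init_vertex dL n (f n c) = f 0 \<alpha>"
    using init_vertex_map[OF K f c(2)] c(3) by simp
  then have m: "(n, f n c) \<in> init_cubes L dL (f 0 \<alpha>)" using c(1) fc by (simp add: init_cubes_def)
  have "restrict (geom_map L dL f \<circ> \<gamma>) {0..e} = restrict (geom_cube L dL n (f n c) \<circ> \<phi>) {0..e}"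
    unfolding h(1) by (rule post_geom_cube[OF f])
  then show ?thesis unfolding Pminus_set_def using m h(3) by blast
qed


section \<open>Continuity\<close>

lemma cellmap_cont:
  assumes f: "precubical_map K dK L dL f"
  shows "continuous_map (cells_top K) (cells_top L) (cellmap f)"
  unfolding cells_top_def
proof (rule continuous_map_from_sum)
  fix n :: nat assume "n \<in> UNIV"
  have fn: "continuous_map (discrete_topology (K n)) (discrete_topology (L n)) (f n)"
    using f unfolding precubical_map_def by auto
  have inner: "continuous_map (prod_topology (discrete_topology (K n)) (cube_top n))
      (prod_topology (discrete_topology (L n)) (cube_top n)) (\<lambda>x. (f n (fst x), snd x))"
  proof (rule continuous_map_pairedI)
    show "continuous_map (prod_topology (discrete_topology (K n)) (cube_top n)) (discrete_topology (L n)) (\<lambda>x. f n (fst x))"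
      using continuous_map_compose[OF continuous_map_fst fn] by (simp add: o_def)
  qed (rule continuous_map_snd)
  have "continuous_map (prod_topology (discrete_topology (K n)) (cube_top n))
      (sum_topology (\<lambda>n. prod_topology (discrete_topology (L n)) (cube_top n)) UNIV)
      ((\<lambda>y. (n, y)) \<circ> (\<lambda>x. (f n (fst x), snd x)))"
  proof (rule continuous_map_compose[OF inner])
    show "continuous_map (prod_topology (discrete_topology (L n)) (cube_top n))
      (sum_topology (\<lambda>n. prod_topology (discrete_topology (L n)) (cube_top n)) UNIV) (\<lambda>y. (n, y))"
      using continuous_map_component_injection[of n UNIV "\<lambda>n. prod_topology (discrete_topology (L n)) (cube_top n)"]
      by simp
  qed
  then show "continuous_map (prod_topology (discrete_topology (K n)) (cube_top n))
      (sum_topology (\<lambda>n. prod_topology (discrete_topology (L n)) (cube_top n)) UNIV)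
      (\<lambda>x. cellmap f (n, x))"
    by (simp add: o_def cellmap_def)
qed

lemma geom_real_alt:
  "geom_real K dK = final_topology (real_class K dK ` topspace (cells_top K)) {(cells_top K, real_class K dK)}"
  by (simp add: geom_real_def)

lemma geom_real_img:
  "\<forall>p\<in>{(cells_top K, real_class K dK)}. snd p ` topspace (fst p) \<subseteq> real_class K dK ` topspace (cells_top K)"
  by simp

lemma topspace_geom_real: "topspace (geom_real K dK) = real_class K dK ` topspace (cells_top K)"
  unfolding geom_real_alt by (rule topspace_final_topology[OF geom_real_img])

lemma real_class_cont: "continuous_map (cells_top K) (geom_real K dK) (real_class K dK)"
  unfolding geom_real_alt
  using continuous_map_final_topology_in[OF geom_real_img, of "(cells_top K, real_class K dK)"] by simp

lemma geom_map_cont: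
  assumes f: "precubical_map K dK L dL f"
  shows "continuous_map (geom_real K dK) (geom_real L dL) (geom_map L dL f)"
  unfolding geom_real_alt[of K dK]
proof (rule continuous_map_final_topology_from[OF geom_real_img])
  have c: "continuous_map (cells_top K) (geom_real L dL) (real_class L dL \<circ> cellmap f)"
    by (rule continuous_map_compose[OF cellmap_cont[OF f] real_class_cont])
  have eq: "\<And>x. (real_class L dL \<circ> cellmap f) x = (geom_map L dL f \<circ> real_class K dK) x"
    by (simp add: geom_map_class[OF f])
  have c2: "continuous_map (cells_top K) (geom_real L dL) (geom_map L dL f \<circ> real_class K dK)"
    using continuous_map_eq[OF c eq] .
  then show "\<forall>p\<in>{(cells_top K, real_class K dK)}. continuous_map (fst p) (geom_real L dL) (geom_map L dL f \<circ> snd p)"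
    by simp
  show "geom_map L dL f ` real_class K dK ` topspace (cells_top K) \<subseteq> topspace (geom_real L dL)"
    using continuous_map_image_subset_topspace[OF c2] by (simp add: image_comp)
qed

lemma topspace_compact_open: "topspace (compact_open e X) = path_carrier e X"
  unfolding compact_open_def topology_generated_by_topspace by blast

lemma topspace_TOP: "topspace (TOP e X) = path_carrier e X"
  by (simp add: TOP_def topspace_compact_open)

lemma topspace_interval_top [simp]: "topspace (interval_top e) = {0..e}"
  by (simp add: interval_top_def)

lemma pc_post:
  assumes h: "continuous_map X Y h" and g: "\<gamma> \<in> path_carrier e X"
  shows "restrict (h \<circ> \<gamma>) {0..e} \<in> path_carrier e Y"
proof -
  have "continuous_map (interval_top e) X \<gamma>" using g by (simp add: path_carrier_def)
  then have "continuous_map (interval_top e) Y (h \<circ> \<gamma>)" using h by (rule continuous_map_compose)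
  then have "continuous_map (interval_top e) Y (restrict (h \<circ> \<gamma>) {0..e})" by simp
  then show ?thesis by (simp add: path_carrier_def)
qed

lemma post_cont:
  assumes h: "continuous_map X Y h"
  shows "continuous_map (compact_open e X) (compact_open e Y) (\<lambda>\<gamma>. restrict (h \<circ> \<gamma>) {0..e})"
  unfolding compact_open_def[of e Y]
proof (rule continuous_on_generated_topo)
  show "(\<lambda>\<gamma>. restrict (h \<circ> \<gamma>) {0..e}) ` topspace (compact_open e X)
     \<subseteq> \<Union> (insert (path_carrier e Y)
            {{\<gamma> \<in> path_carrier e Y. \<gamma> ` C \<subseteq> U} |C U. compact C \<and> C \<subseteq> {0..e} \<and> openin Y U})"
    using pc_post[OF h] by (auto simp: topspace_compact_open)
next
  fix U assume U: "U \<in> insert (path_carrier e Y)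
            {{\<gamma> \<in> path_carrier e Y. \<gamma> ` C \<subseteq> U} |C U. compact C \<and> C \<subseteq> {0..e} \<and> openin Y U}"
  show "openin (compact_open e X) ((\<lambda>\<gamma>. restrict (h \<circ> \<gamma>) {0..e}) -` U \<inter> topspace (compact_open e X))"
  proof (cases "U = path_carrier e Y")
    case True
    then have "(\<lambda>\<gamma>. restrict (h \<circ> \<gamma>) {0..e}) -` U \<inter> topspace (compact_open e X) = topspace (compact_open e X)"
      using pc_post[OF h] by (auto simp: topspace_compact_open)
    then show ?thesis by simp
  next
    case False
    then obtain C V where CV: "U = {\<gamma> \<in> path_carrier e Y. \<gamma> ` C \<subseteq> V}" "compact C" "C \<subseteq> {0..e}" "openin Y V"
      using U by blast
    let ?A = "(\<lambda>\<gamma>. restrict (h \<circ> \<gamma>) {0..e}) -` U \<inter> topspace (compact_open e X)"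
    let ?B = "{\<gamma> \<in> path_carrier e X. \<gamma> ` C \<subseteq> {x \<in> topspace X. h x \<in> V}}"
    have sub1: "?A \<subseteq> ?B"
    proof (rule subsetI)
      fix \<gamma> assume a: "\<gamma> \<in> ?A"
      then have g: "\<gamma> \<in> path_carrier e X" by (simp add: topspace_compact_open)
      have "\<gamma> ` {0..e} \<subseteq> topspace X"
        using g continuous_map_image_subset_topspace[of "interval_top e" X \<gamma>]
        by (simp add: path_carrier_def)
      then have "\<gamma> ` C \<subseteq> topspace X" using CV(3) by blast
      moreover have "h ` \<gamma> ` C \<subseteq> V" using a CV(1,3) by (auto simp: subset_iff)
      ultimately show "\<gamma> \<in> ?B"
        using g by blast
    qed
    have sub2: "?B \<subseteq> ?A"
    proof (rule subsetI)
      fix \<gamma> assume a: "\<gamma> \<in> ?B"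
      then have g: "\<gamma> \<in> path_carrier e X" by simp
      have "restrict (h \<circ> \<gamma>) {0..e} ` C \<subseteq> V" using a CV(3) by (auto simp: subset_iff)
      then show "\<gamma> \<in> ?A"
        using pc_post[OF h g] g CV(1) by (simp add: topspace_compact_open)
    qed
    have eq: "?A = ?B" using sub1 sub2 by (rule equalityI)
    have "openin X {x \<in> topspace X. h x \<in> V}" using h CV(4) by (rule openin_continuous_map_preimage)
    then have "{\<gamma> \<in> path_carrier e X. \<gamma> ` C \<subseteq> {x \<in> topspace X. h x \<in> V}} \<in>
        insert (path_carrier e X)
            {{\<gamma> \<in> path_carrier e X. \<gamma> ` C \<subseteq> U} |C U. compact C \<and> C \<subseteq> {0..e} \<and> openin X U}"
      using CV(2,3) by blast
    then have opB: "openin (compact_open e X) ?B"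
      unfolding compact_open_def by (rule topology_generated_by_Basis)
    show ?thesis using opB eq by simp
  qed
qed


lemma topspace_Pminus_alpha:
  "topspace (Pminus_alpha K dK e \<alpha>) = path_carrier e (geom_real K dK) \<inter> Pminus_set K dK e \<alpha>"
  by (simp add: Pminus_alpha_def topspace_TOP)

lemma topspace_Pminus_mem:
  assumes "p \<in> topspace (Pminus K dK e)"
  shows "fst p \<in> K 0" "snd p \<in> path_carrier e (geom_real K dK)" "snd p \<in> Pminus_set K dK e (fst p)"
  using assms by (auto simp: Pminus_def topspace_Pminus_alpha)

lemma Pminus_cont:
  assumes K: "precubical K dK" and f: "precubical_map K dK L dL f"
  shows "continuous_map (Pminus K dK e) (Pminus L dL e) (Pminus_map L dL f e)"
  unfolding Pminus_def[of K dK e]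
proof (rule continuous_map_from_sum)
  fix \<alpha> assume a: "\<alpha> \<in> K 0"
  have fa: "f 0 \<alpha> \<in> L 0" using f a unfolding precubical_map_def by simp
  have gc: "continuous_map (geom_real K dK) (geom_real L dL) (geom_map L dL f)"
    by (rule geom_map_cont[OF f])
  let ?P = "\<lambda>\<gamma>. restrict (geom_map L dL f \<circ> \<gamma>) {0..e}"
  have mem: "?P \<gamma> \<in> path_carrier e (geom_real L dL) \<inter> Pminus_set L dL e (f 0 \<alpha>)"
    if "\<gamma> \<in> path_carrier e (geom_real K dK) \<inter> Pminus_set K dK e \<alpha>" for \<gamma>
    using pc_post[OF gc] Pset_map[OF K f] that by blast
  show "continuous_map (Pminus_alpha K dK e \<alpha>) (Pminus L dL e) (\<lambda>x. Pminus_map L dL f e (\<alpha>, x))"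
    unfolding Pminus_alpha_def[of K dK e \<alpha>]
  proof (rule continuous_map_from_dk)
    show "(\<lambda>x. Pminus_map L dL f e (\<alpha>, x)) ` topspace (subtopology (TOP e (geom_real K dK)) (Pminus_set K dK e \<alpha>))
        \<subseteq> topspace (Pminus L dL e)"
      using mem fa by (auto simp: Pminus_map_def topspace_TOP Pminus_def topspace_Pminus_alpha)
  next
    fix n \<sigma>
    assume s: "continuous_map (simplex_top n) (subtopology (TOP e (geom_real K dK)) (Pminus_set K dK e \<alpha>)) \<sigma>"
    have s1: "continuous_map (simplex_top n) (compact_open e (geom_real K dK)) \<sigma>"
      using continuous_map_into_fulltopology[OF s] unfolding TOP_def
      by (rule continuous_map_simplex_dk[THEN iffD1])
    have s2: "continuous_map (simplex_top n) (compact_open e (geom_real L dL)) (?P \<circ> \<sigma>)"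
      by (rule continuous_map_compose[OF s1 post_cont[OF gc]])
    have s3: "continuous_map (simplex_top n) (TOP e (geom_real L dL)) (?P \<circ> \<sigma>)"
      unfolding TOP_def using s2 by (rule continuous_map_simplex_dk[THEN iffD2])
    have img: "\<sigma> ` topspace (simplex_top n) \<subseteq> path_carrier e (geom_real K dK) \<inter> Pminus_set K dK e \<alpha>"
      using continuous_map_image_subset_topspace[OF s] by (simp add: topspace_TOP)
    have s4: "continuous_map (simplex_top n) (subtopology (TOP e (geom_real L dL)) (Pminus_set L dL e (f 0 \<alpha>))) (?P \<circ> \<sigma>)"
    proof -
      have "(?P \<circ> \<sigma>) \<in> topspace (simplex_top n) \<rightarrow> Pminus_set L dL e (f 0 \<alpha>)"
      proof (rule funcsetI)
        fix x assume "x \<in> topspace (simplex_top n)"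
        then have "\<sigma> x \<in> path_carrier e (geom_real K dK) \<inter> Pminus_set K dK e \<alpha>" using img by blast
        then show "(?P \<circ> \<sigma>) x \<in> Pminus_set L dL e (f 0 \<alpha>)" using mem by simp
      qed
      then show ?thesis unfolding continuous_map_in_subtopology using s3 by blast
    qed
    have s5: "continuous_map (simplex_top n) (Pminus_alpha L dL e (f 0 \<alpha>)) (?P \<circ> \<sigma>)"
      unfolding Pminus_alpha_def using s4 by (rule continuous_map_simplex_dk[THEN iffD2])
    have inj: "continuous_map (Pminus_alpha L dL e (f 0 \<alpha>)) (Pminus L dL e) (\<lambda>y. (f 0 \<alpha>, y))"
      unfolding Pminus_def using continuous_map_component_injection[of "f 0 \<alpha>" "L 0" "Pminus_alpha L dL e"] fa
      by simp
    have s6: "continuous_map (simplex_top n) (Pminus L dL e) ((\<lambda>y. (f 0 \<alpha>, y)) \<circ> (?P \<circ> \<sigma>))"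
      by (rule continuous_map_compose[OF s5 inj])
    show "continuous_map (simplex_top n) (Pminus L dL e) ((\<lambda>x. Pminus_map L dL f e (\<alpha>, x)) \<circ> \<sigma>)"
      using s6 by (simp add: o_def Pminus_map_def)
  qed
qed

lemma Pminus_map_cube:
  assumes K: "precubical K dK" and f: "precubical_map K dK L dL f"
    and p: "p \<in> topspace (Pminus K dK e)"
  obtains n c \<phi> where "snd p = restrict (geom_cube K dK n c \<circ> \<phi>) {0..e}"
    "Pminus_map L dL f e p = (f 0 (fst p), restrict (geom_cube L dL n (f n c) \<circ> \<phi>) {0..e})"
proof -
  obtain n c \<phi> where h: "snd p = restrict (geom_cube K dK n c \<circ> \<phi>) {0..e}"
    using topspace_Pminus_mem(3)[OF p] unfolding Pminus_set_def by blast
  have "Pminus_map L dL f e p = (f 0 (fst p), restrict (geom_cube L dL n (f n c) \<circ> \<phi>) {0..e})"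
    unfolding Pminus_map_def h by (simp add: post_geom_cube[OF f])
  then show ?thesis using h that by blast
qed

theorem proposition4p3:
  fixes e :: real
    and K :: "nat \<Rightarrow> 'a set" and dK :: "nat \<Rightarrow> nat \<Rightarrow> bool \<Rightarrow> 'a \<Rightarrow> 'a"
    and L :: "nat \<Rightarrow> 'b set" and dL :: "nat \<Rightarrow> nat \<Rightarrow> bool \<Rightarrow> 'b \<Rightarrow> 'b"
    and M :: "nat \<Rightarrow> 'c set" and dM :: "nat \<Rightarrow> nat \<Rightarrow> bool \<Rightarrow> 'c \<Rightarrow> 'c"
    and f :: "nat \<Rightarrow> 'a \<Rightarrow> 'b" and g :: "nat \<Rightarrow> 'b \<Rightarrow> 'c"
  assumes "0 < e" and "e < 1"
    and "precubical K dK" and "precubical L dL" and "precubical M dM"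
    and "precubical_map K dK L dL f" and "precubical_map L dL M dM g"
  shows "delta_generated (Pminus K dK e) \<and>
         continuous_map (Pminus K dK e) (Pminus L dL e) (Pminus_map L dL f e) \<and>
         (\<forall>p \<in> topspace (Pminus K dK e). Pminus_map K dK (\<lambda>n c. c) e p = p) \<and>
         (\<forall>p \<in> topspace (Pminus K dK e).
           Pminus_map M dM (\<lambda>n. g n \<circ> f n) e p = Pminus_map M dM g e (Pminus_map L dL f e p))"
proof (intro conjI ballI)
  show "delta_generated (Pminus K dK e)"
    unfolding Pminus_def Pminus_alpha_def by (rule delta_generated_sum)
  show "continuous_map (Pminus K dK e) (Pminus L dL e) (Pminus_map L dL f e)"
    by (rule Pminus_cont[OF assms(3) assms(6)])
next
  fix p assume p: "p \<in> topspace (Pminus K dK e)"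
  obtain n c \<phi> where h: "snd p = restrict (geom_cube K dK n c \<circ> \<phi>) {0..e}"
    "Pminus_map K dK (\<lambda>n c. c) e p = (fst p, restrict (geom_cube K dK n c \<circ> \<phi>) {0..e})"
    using Pminus_map_cube[OF assms(3) pm_id p] by blast
  show "Pminus_map K dK (\<lambda>n c. c) e p = p"
    using h by (simp add: prod_eq_iff)
next
  fix p assume p: "p \<in> topspace (Pminus K dK e)"
  have gf: "precubical_map K dK M dM (\<lambda>n. g n \<circ> f n)" by (rule pm_comp[OF assms(6) assms(7)])
  obtain n c \<phi> where h: "snd p = restrict (geom_cube K dK n c \<circ> \<phi>) {0..e}"
    "Pminus_map L dL f e p = (f 0 (fst p), restrict (geom_cube L dL n (f n c) \<circ> \<phi>) {0..e})"
    using Pminus_map_cube[OF assms(3) assms(6) p] by blast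
  have l: "Pminus_map M dM (\<lambda>n. g n \<circ> f n) e p
      = (g 0 (f 0 (fst p)), restrict (geom_cube M dM n (g n (f n c)) \<circ> \<phi>) {0..e})"
    unfolding Pminus_map_def h(1) by (simp add: post_geom_cube[OF gf])
  have "Pminus_map M dM g e (Pminus_map L dL f e p)
      = Pminus_map M dM g e (f 0 (fst p), restrict (geom_cube L dL n (f n c) \<circ> \<phi>) {0..e})"
    by (simp only: h(2))
  also have "\<dots> = (g 0 (f 0 (fst p)), restrict (geom_cube M dM n (g n (f n c)) \<circ> \<phi>) {0..e})"
    by (simp add: Pminus_map_def post_geom_cube[OF assms(7)])
  finally have r: "Pminus_map M dM g e (Pminus_map L dL f e p)
      = (g 0 (f 0 (fst p)), restrict (geom_cube M dM n (g n (f n c)) \<circ> \<phi>) {0..e})" .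
  show "Pminus_map M dM (\<lambda>n. g n \<circ> f n) e p = Pminus_map M dM g e (Pminus_map L dL f e p)"
    using l r by simp
qed

end
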